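(* Let $r$ be an even integer and $s$ any integer. Then $$\sum_{k=1}^\infty\frac{L_{2rk+s}}{L_r^{2k}(2k-1)(2k)(2k+1)}=\frac14F_s\sqrt5\ln\!\Big(\frac{\beta^rL_r+1}{\alpha^rL_r+1}\Big)+\frac14L_s\ln\!\Big(\frac{2L_r^2+1}{L_r^4}\Big)-\frac{L_s}{2}$$ $$+\frac18L_r^2F_s\sqrt5\ln\!\Big(\frac{L_r+\alpha^r}{L_r+\beta^r}\alpha^{2r}\Big)+\frac18L_r^2L_s\ln(2L_r^2+1)$$ $$-\frac{L_r^2-1}{8L_r}F_{r+s}\sqrt5\ln\!\Big(\frac{L_r+\alpha^r}{L_r+\beta^r}\alpha^{2r}\Big)-\frac{L_r^2-1}{8L_r}L_{r+s}\ln(2L_r^2+1),$$ and $$\sum_{k=1}^\infty\frac{F_{2rk+s}}{L_r^{2k}(2k-1)(2k)(2k+1)}=\frac14\frac{L_s}{\sqrt5}\ln\!\Big(\frac{\beta^rL_r+1}{\alpha^rL_r+1}\Big)+\frac14F_s\ln\!\Big(\frac{2L_r^2+1}{L_r^4}\Big)-\frac{F_s}{2}$$ $$+\frac18L_r^2\frac{L_s}{\sqrt5}\ln\!\Big(\frac{L_r+\alpha^r}{L_r+\beta^r}\alpha^{2r}\Big)+\frac18L_r^2F_s\ln(2L_r^2+1)$$ $$-\frac{L_r^2-1}{8L_r}\frac{L_{r+s}}{\sqrt5}\ln\!\Big(\frac{L_r+\alpha^r}{L_r+\beta^r}\alpha^{2r}\Big)-\frac{L_r^2-1}{8L_r}F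_{r+s}\ln(2L_r^2+1).$$
   Context: $F_n$ and $L_n$ are the Fibonacci and Lucas numbers for $n\in\mathbb Z$: $F_n=(\alpha^n-\beta^n)/(\alpha-\beta)$, $L_n=\alpha^n+\beta^n$, where $\alpha=(1+\sqrt5)/2$, $\beta=(1-\sqrt5)/2$. *)

theory Defs
  imports "HOL-Analysis.Analysis"
begin

definition fib_alpha :: real where "fib_alpha = (1 + sqrt 5) / 2"
definition fib_beta :: real where "fib_beta = (1 - sqrt 5) / 2"

definition Fib :: "int \<Rightarrow> real" where
  "Fib n = (fib_alpha powi n - fib_beta powi n) / (fib_alpha - fib_beta)"
definition Luc :: "int \<Rightarrow> real" where
  "Luc n = fib_alpha powi n + fib_beta powi n"

end

theory Submission
  imports Defs
begin

lemma G_sums: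
  fixes t :: real assumes t0: "0 < t" and t1: "t < 1"
  shows "(\<lambda>j. t^(2*Suc j) / ((2*real (Suc j) - 1) * (2*real (Suc j)) * (2*real (Suc j) + 1)))
     sums ((t + 1/t)/4 * ln ((1+t)/(1-t)) + ln (1-t^2)/2 - 1/2)"
proof -
  define H where "H = ln ((1+t)/(1-t)) / 2"
  have x0: "(1+t)/(1-t) > 0" using t0 t1 by simp
  have xt: "((1+t)/(1-t) - 1) / ((1+t)/(1-t) + 1) = t" using t0 t1 by (simp add: field_simps)
  have "(\<lambda>n. (2*(((1+t)/(1-t) - 1) / ((1+t)/(1-t) + 1)) ^ (2*n+1) / of_nat (2*n+1))) sums ln ((1+t)/(1-t))"
    by (rule ln_series_quadratic[OF x0])
  hence "(\<lambda>n. 2*t^(2*n+1) / real (2*n+1)) sums ln ((1+t)/(1-t))" unfolding xt .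
  from sums_divide[OF this, of 2]
  have "(\<lambda>n. 2*t^(2*n+1) / real (2*n+1) / 2) sums H" unfolding H_def .
  moreover have "(\<lambda>n. 2*t^(2*n+1) / real (2*n+1) / 2) = (\<lambda>n. t^(2*n+1) / real (2*n+1))" by (intro ext) (simp add: field_simps)
  ultimately have Ha: "(\<lambda>n. t^(2*n+1) / real (2*n+1)) sums H" by simp
  have Hc0: "(\<lambda>n. t^(2*Suc n+1) / real (2*Suc n+1)) sums (H - t)"
    using sums_Suc_iff[of "\<lambda>n. t^(2*n+1) / real (2*n+1)" "H - t"] Ha by simp
  have "\<bar>-(t^2)\<bar> < 1" using t0 t1 by (simp add: power_less_one_iff abs_less_iff)
  from ln_series'[OF this]
  have "(\<lambda>n. - ((t^2)^n) / real n) sums ln (1 - t^2)" by simp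
  hence Hb: "(\<lambda>n. - ((t^2)^Suc n) / real (Suc n)) sums ln (1 - t^2)"
    using sums_Suc_iff[of "\<lambda>n. - ((t^2)^n) / real n" "ln (1 - t^2)"] by simp
  have S: "(\<lambda>n. t/2 * (t^(2*n+1) / real (2*n+1)) + 1/2 * (- ((t^2)^Suc n) / real (Suc n))
      + 1/(2*t) * (t^(2*Suc n+1) / real (2*Suc n+1))) sums (t/2*H + 1/2 * ln (1-t^2) + 1/(2*t) * (H - t))"
    by (intro sums_add sums_mult Ha Hb Hc0)
  have eq: "t/2 * (t^(2*n+1) / real (2*n+1)) + 1/2 * (- ((t^2)^Suc n) / real (Suc n))
      + 1/(2*t) * (t^(2*Suc n+1) / real (2*Suc n+1)) =
      t^(2*Suc n) / ((2*real (Suc n) - 1) * (2*real (Suc n)) * (2*real (Suc n) + 1))" for n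
  proof -
    have p1: "t^(2*n+1) = t^(2*Suc n) / t" using t0 by (simp add: field_simps)
    have p2: "t^(2*Suc n+1) = t^(2*Suc n) * t" by simp
    have p3: "(t^2)^Suc n = t^(2*Suc n)" by (simp only: power_mult)
    have r: "real (2*n+1) = 2*real n+1" "real (2*Suc n+1) = 2*real n+3" "real (Suc n) = real n + 1" by simp_all
    have ab: "t/2 * (T / t / (2*m+1)) + 1/2 * (- T / (m+1)) + 1/(2*t) * (T * t / (2*m+3))
       = T / ((2*(m+1) - 1) * (2*(m+1)) * (2*(m+1)+1))" if "m \<ge> 0" for T m :: real
    proof -
      have d: "2*m+1 > 0" "m+1 > 0" "2*m+3 > 0" "(2*(m+1) - 1) * (2*(m+1)) * (2*(m+1)+1) > 0" using that by simp_all
      have e: "t/2 * (T / t / (2*m+1)) = T / (2*(2*m+1))" "1/(2*t) * (T * t / (2*m+3)) = T/(2*(2*m+3))" using t0 by simp_all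
      have d2: "2*m+1 \<noteq> 0" "m+1 \<noteq> 0" "2*m+3 \<noteq> 0" using d by simp_all
      have r: "(2*(m+1) - 1) * (2*(m+1)) * (2*(m+1)+1) = (2*m+1)*(2*(m+1))*(2*m+3)" by algebra
      show ?thesis unfolding e r using d2 apply (simp add: divide_simps) by algebra
    qed
    show ?thesis unfolding p1 p2 p3 r by (rule ab) simp
  qed
  have val: "t/2*H + 1/2 * ln (1-t^2) + 1/(2*t) * (H - t) = (t + 1/t)/4 * ln ((1+t)/(1-t)) + ln (1-t^2)/2 - 1/2"
    unfolding H_def using t0 by (simp add: field_simps)
  show ?thesis using S unfolding eq val .
qed

lemma alg1:
  fixes a b L c p q u u' v w z A B C D Fs Ls Frs Lrs :: real
  assumes a: "a > 0" "b > 0" and ab: "a*b = 1" and L: "L = a + b" and c: "c \<noteq> 0" and u': "u' = -u"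
    and F: "Fs = (p-q)/c" "Ls = p+q" "Frs = (a*p-b*q)/c" "Lrs = a*p+b*q"
    and lg: "A = -2*u+v-w" "B = v+w-4*z" "C = v-w+2*u" "D = v+w"
  shows "p*((a/L + L/a)/4*(u+v) + (v-u-2*z)/2 - 1/2) + q*((b/L+L/b)/4*(u'+w) + (w-u'-2*z)/2-1/2)
  = 1/4*Fs*c*A + 1/4*Ls*B - Ls/2 + 1/8*L^2*Fs*c*C + 1/8*L^2*Ls*D - (L^2-1)/(8*L)*Frs*c*C - (L^2-1)/(8*L)*Lrs*D"
proof -
  have L0: "L > 0" using a L by simp
  have e: "L/a = L*b" "L/b = L*a" using c a ab F by (simp_all add: field_simps)
  show ?thesis
    unfolding lg F e u' using L0 c apply (simp add: field_simps) using ab L by algebra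
qed
lemma alg2:
  fixes a b L c p q u u' v w z A B C D Fs Ls Frs Lrs :: real
  assumes a: "a > 0" "b > 0" and ab: "a*b = 1" and L: "L = a + b" and c: "c \<noteq> 0" and u': "u' = -u"
    and F: "Fs = (p-q)/c" "Ls = p+q" "Frs = (a*p-b*q)/c" "Lrs = a*p+b*q"
    and lg: "A = -2*u+v-w" "B = v+w-4*z" "C = v-w+2*u" "D = v+w"
  shows "(p*((a/L + L/a)/4*(u+v) + (v-u-2*z)/2 - 1/2) - q*((b/L+L/b)/4*(u'+w) + (w-u'-2*z)/2-1/2))/c
  = 1/4*Ls/c*A + 1/4*Fs*B - Fs/2 + 1/8*L^2*Ls/c*C + 1/8*L^2*Fs*D - (L^2-1)/(8*L)*Lrs/c*C - (L^2-1)/(8*L)*Frs*D"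
proof -
  have L0: "L > 0" using a L by simp
  have e: "L/a = L*b" "L/b = L*a" using c a ab F by (simp_all add: field_simps)
  show ?thesis
    unfolding lg F e u' using L0 c apply (simp add: field_simps) using ab L by algebra
qed

lemma G_log:
  fixes a b L :: real
  assumes a: "a > 0" "b > 0" and ab: "a*b = 1" and L: "L = a + b"
  shows "(a/L + 1/(a/L))/4 * ln ((1+a/L)/(1-a/L)) + ln (1-(a/L)^2)/2 - 1/2
    = (a/L + L/a)/4*(ln a + ln (L+a)) + (ln (L+a) - ln a - 2*ln L)/2 - 1/2"
proof -
  have L0: "L > 0" using a L by simp
  have binv: "b = 1/a" using ab a by (simp add: field_simps)
  have h1: "(1+a/L)/(1-a/L) = a*(L+a)"
  proof -
    have e1: "1 - a/L = b/L" using L0 L by (simp add: field_simps)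
    have e2: "1 + a/L = (L+a)/L" using L0 by (simp add: field_simps)
    have "((L+a)/L)/(b/L) = (L+a)/b" using L0 by simp
    also have "... = a*(L+a)" using binv a by simp
    finally show ?thesis unfolding e1 e2 .
  qed
  have h2: "1-(a/L)^2 = (L+a)/(a*L^2)"
  proof -
    have "1-(a/L)^2 = (L-a)*(L+a)/L^2" using L0 by (simp add: field_simps power2_eq_square)
    also have "L - a = 1/a" using L binv by simp
    finally show ?thesis using a by simp
  qed
  have l1: "ln ((1+a/L)/(1-a/L)) = ln a + ln (L+a)" unfolding h1 using a L0 by (simp add: ln_mult)
  have l2: "ln (1-(a/L)^2) = ln (L+a) - ln a - 2*ln L" unfolding h2 using a L0
    by (simp add: ln_div ln_mult ln_realpow)
  show ?thesis unfolding l1 l2 by simp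
qed

theorem theorem12:
  fixes r s :: int
  assumes "even r"
  shows "(\<lambda>j. let k = Suc j in
            Luc (2*r*int k + s) / (Luc r ^ (2*k) * (2*real k - 1) * (2*real k) * (2*real k + 1)))
         sums
         (1/4 * Fib s * sqrt 5 * ln ((fib_beta powi r * Luc r + 1) / (fib_alpha powi r * Luc r + 1))
          + 1/4 * Luc s * ln ((2 * (Luc r)\<^sup>2 + 1) / Luc r ^ 4) - Luc s / 2
          + 1/8 * (Luc r)\<^sup>2 * Fib s * sqrt 5 * ln ((Luc r + fib_alpha powi r) / (Luc r + fib_beta powi r) * fib_alpha powi (2*r))
          + 1/8 * (Luc r)\<^sup>2 * Luc s * ln (2 * (Luc r)\<^sup>2 + 1)
          - ((Luc r)\<^sup>2 - 1) / (8 * Luc r) * Fib (r + s) * sqrt 5 * ln ((Luc r + fib_alpha powi r) / (Luc r + fib_beta powi r) * fib_alpha powi (2*r))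
          - ((Luc r)\<^sup>2 - 1) / (8 * Luc r) * Luc (r + s) * ln (2 * (Luc r)\<^sup>2 + 1))
       \<and> (\<lambda>j. let k = Suc j in
            Fib (2*r*int k + s) / (Luc r ^ (2*k) * (2*real k - 1) * (2*real k) * (2*real k + 1)))
         sums
         (1/4 * Luc s / sqrt 5 * ln ((fib_beta powi r * Luc r + 1) / (fib_alpha powi r * Luc r + 1))
          + 1/4 * Fib s * ln ((2 * (Luc r)\<^sup>2 + 1) / Luc r ^ 4) - Fib s / 2
          + 1/8 * (Luc r)\<^sup>2 * Luc s / sqrt 5 * ln ((Luc r + fib_alpha powi r) / (Luc r + fib_beta powi r) * fib_alpha powi (2*r))
          + 1/8 * (Luc r)\<^sup>2 * Fib s * ln (2 * (Luc r)\<^sup>2 + 1)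
          - ((Luc r)\<^sup>2 - 1) / (8 * Luc r) * Luc (r + s) / sqrt 5 * ln ((Luc r + fib_alpha powi r) / (Luc r + fib_beta powi r) * fib_alpha powi (2*r))
          - ((Luc r)\<^sup>2 - 1) / (8 * Luc r) * Fib (r + s) * ln (2 * (Luc r)\<^sup>2 + 1))"
proof -
  obtain m where rm: "r = 2*m" using assms by (auto elim: evenE)
  have al0: "fib_alpha > 0" unfolding fib_alpha_def by (simp add: add_pos_nonneg)
  have s5: "sqrt 5 \<noteq> 1" by simp
  have be0: "fib_beta \<noteq> 0" unfolding fib_beta_def using s5 by simp
  have albe: "fib_alpha * fib_beta = -1" unfolding fib_alpha_def fib_beta_def
    by (simp add: field_simps algebra_simps)
  have amb: "fib_alpha - fib_beta = sqrt 5" unfolding fib_alpha_def fib_beta_def by (simp add: field_simps)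
  define a where "a = fib_alpha powi r"
  define b where "b = fib_beta powi r"
  define p where "p = fib_alpha powi s"
  define q where "q = fib_beta powi s"
  define L where "L = Luc r"
  have a0: "a > 0" unfolding a_def using al0 by simp
  have b0: "b > 0"
  proof -
    have "b = (fib_beta powi 2) powi m" unfolding b_def rm by (simp add: power_int_mult)
    also have "... > 0" using be0 by simp
    finally show ?thesis .
  qed
  have ab1: "a*b = 1"
  proof -
    have "a*b = (fib_alpha * fib_beta) powi r" unfolding a_def b_def by (simp add: power_int_mult_distrib)
    also have "... = ((-1) powi 2) powi m" unfolding albe rm by (simp add: power_int_mult)
    finally show ?thesis by simp
  qed
  have La: "L = a + b" unfolding L_def Luc_def a_def b_def ..
  have L0: "L > 0" using La a0 b0 by simp
  have pw: "x powi (2*r*int k + s) = (x powi r)^(2*k) * x powi s" if "x \<noteq> 0" for x :: real and k :: nat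
  proof -
    have "x powi (2*r*int k + s) = x powi (r * int (2*k)) * x powi s" using that
      by (simp add: power_int_add mult.commute mult.left_commute)
    also have "... = (x powi r)^(2*k) * x powi s" by (simp only: power_int_mult power_int_of_nat)
    finally show ?thesis .
  qed
  have Lk: "Luc (2*r*int k + s) = p * a^(2*k) + q * b^(2*k)" for k :: nat
    unfolding Luc_def pw[OF al0[THEN less_imp_neq, symmetric]] pw[OF be0] a_def b_def p_def q_def by simp
  have Fk: "Fib (2*r*int k + s) = (p * a^(2*k) - q * b^(2*k)) / sqrt 5" for k :: nat
    unfolding Fib_def amb pw[OF al0[THEN less_imp_neq, symmetric]] pw[OF be0] a_def b_def p_def q_def by simp
  define Dn where "Dn = (\<lambda>j::nat. (2*real (Suc j) - 1) * (2*real (Suc j)) * (2*real (Suc j) + 1))"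
  define GT where "GT = (\<lambda>t::real. \<lambda>j::nat. t^(2*Suc j) / Dn j)"
  define GV where "GV = (\<lambda>t::real. (t + 1/t)/4 * ln ((1+t)/(1-t)) + ln (1-t^2)/2 - 1/2)"
  have ta: "0 < a/L" "a/L < 1" using a0 b0 La L0 by simp_all
  have tb: "0 < b/L" "b/L < 1" using a0 b0 La L0 by simp_all
  have Sa: "GT (a/L) sums GV (a/L)" unfolding GT_def GV_def Dn_def by (rule G_sums[OF ta])
  have Sb: "GT (b/L) sums GV (b/L)" unfolding GT_def GV_def Dn_def by (rule G_sums[OF tb])
  have Dpos: "Dn j > 0" for j unfolding Dn_def by simp
  have term1: "(\<lambda>j. let k = Suc j in
            Luc (2*r*int k + s) / (Luc r ^ (2*k) * (2*real k - 1) * (2*real k) * (2*real k + 1)))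
      = (\<lambda>j. p * GT (a/L) j + q * GT (b/L) j)"
  proof
    fix j
    have "Luc r ^ (2*Suc j) * (2*real (Suc j) - 1) * (2*real (Suc j)) * (2*real (Suc j) + 1) = L^(2*Suc j) * Dn j"
      unfolding L_def Dn_def by (simp add: mult.assoc)
    then show "(let k = Suc j in
            Luc (2*r*int k + s) / (Luc r ^ (2*k) * (2*real k - 1) * (2*real k) * (2*real k + 1)))
      = p * GT (a/L) j + q * GT (b/L) j"
      unfolding Let_def Lk GT_def power_divide using Dpos[of j] L0 by (simp add: field_simps)
  qed
  have term2: "(\<lambda>j. let k = Suc j in
            Fib (2*r*int k + s) / (Luc r ^ (2*k) * (2*real k - 1) * (2*real k) * (2*real k + 1)))
      = (\<lambda>j. (p * GT (a/L) j - q * GT (b/L) j) / sqrt 5)"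
  proof
    fix j
    have "Luc r ^ (2*Suc j) * (2*real (Suc j) - 1) * (2*real (Suc j)) * (2*real (Suc j) + 1) = L^(2*Suc j) * Dn j"
      unfolding L_def Dn_def by (simp add: mult.assoc)
    then show "(let k = Suc j in
            Fib (2*r*int k + s) / (Luc r ^ (2*k) * (2*real k - 1) * (2*real k) * (2*real k + 1)))
      = (p * GT (a/L) j - q * GT (b/L) j) / sqrt 5"
      unfolding Let_def Fk GT_def power_divide using Dpos[of j] L0 by (simp add: field_simps)
  qed
  have S1: "(\<lambda>j. p * GT (a/L) j + q * GT (b/L) j) sums (p * GV (a/L) + q * GV (b/L))"
    by (intro sums_add sums_mult Sa Sb)
  have S2: "(\<lambda>j. (p * GT (a/L) j - q * GT (b/L) j) / sqrt 5) sums ((p * GV (a/L) - q * GV (b/L)) / sqrt 5)"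
    by (intro sums_divide sums_diff sums_mult Sa Sb)
  have GVa: "GV (a/L) = (a/L + L/a)/4*(ln a + ln (L+a)) + (ln (L+a) - ln a - 2*ln L)/2 - 1/2"
    unfolding GV_def by (rule G_log[OF a0 b0 ab1 La])
  have GVb: "GV (b/L) = (b/L + L/b)/4*(ln b + ln (L+b)) + (ln (L+b) - ln b - 2*ln L)/2 - 1/2"
    unfolding GV_def by (rule G_log[OF b0 a0]) (use ab1 La in \<open>simp_all add: mult.commute\<close>)
  have lnb: "ln b = - ln a"
  proof -
    have "b = 1/a" using ab1 a0 by (simp add: field_simps)
    thus ?thesis using a0 by (simp add: ln_div)
  qed
  have Fs: "Fib s = (p - q) / sqrt 5" unfolding Fib_def amb p_def q_def ..
  have Ls: "Luc s = p + q" unfolding Luc_def p_def q_def ..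
  have Frs: "Fib (r+s) = (a*p - b*q) / sqrt 5" unfolding Fib_def amb p_def q_def a_def b_def
    using al0 be0 by (simp add: power_int_add)
  have Lrs: "Luc (r+s) = a*p + b*q" unfolding Luc_def p_def q_def a_def b_def
    using al0 be0 by (simp add: power_int_add)
  have lA: "ln ((fib_beta powi r * Luc r + 1) / (fib_alpha powi r * Luc r + 1)) = -2*ln a + ln (L+a) - ln (L+b)"
  proof -
    have "(fib_beta powi r * Luc r + 1) / (fib_alpha powi r * Luc r + 1) = (b*(L+a))/(a*(L+b))"
    proof -
      have "b*L + 1 = b*(L+a)" "a*L+1 = a*(L+b)" using ab1 La by (simp_all add: algebra_simps)
      thus ?thesis unfolding a_def b_def L_def by simp
    qed
    thus ?thesis using a0 b0 L0 lnb by (simp add: ln_div ln_mult)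
  qed
  have lB: "ln ((2 * (Luc r)\<^sup>2 + 1) / Luc r ^ 4) = ln (L+a) + ln (L+b) - 4*ln L"
  proof -
    have "2 * (Luc r)\<^sup>2 + 1 = (L+a)*(L+b)" unfolding L_def[symmetric] using ab1 La
      by (simp add: algebra_simps power2_eq_square)
    thus ?thesis unfolding L_def[symmetric] using a0 b0 L0 by (simp add: ln_div ln_mult ln_realpow)
  qed
  have lC: "ln ((Luc r + fib_alpha powi r) / (Luc r + fib_beta powi r) * fib_alpha powi (2*r)) = ln (L+a) - ln (L+b) + 2*ln a"
  proof -
    have "fib_alpha powi (2*r) = a^2" unfolding a_def by (simp add: power_int_mult mult.commute[of 2])
    thus ?thesis unfolding L_def[symmetric] a_def[symmetric] b_def[symmetric]
      using a0 b0 L0 by (simp add: ln_div ln_mult ln_realpow)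
  qed
  have lD: "ln (2 * (Luc r)\<^sup>2 + 1) = ln (L+a) + ln (L+b)"
  proof -
    have "2 * (Luc r)\<^sup>2 + 1 = (L+a)*(L+b)" unfolding L_def[symmetric] using ab1 La
      by (simp add: algebra_simps power2_eq_square)
    thus ?thesis using a0 b0 L0 by (simp add: ln_mult)
  qed
  have c0: "sqrt 5 \<noteq> 0" by simp
  note E1 = alg1[OF a0 b0 ab1 La c0 lnb Fs Ls Frs Lrs lA lB lC lD]
  note E2 = alg2[OF a0 b0 ab1 La c0 lnb Fs Ls Frs Lrs lA lB lC lD]
  from S1[unfolded GVa GVb E1, folded term1, unfolded L_def]
       S2[unfolded GVa GVb E2, folded term2, unfolded L_def]
  show ?thesis by (rule conjI)
qed

end
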